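(* Suppose the relationship network on $V$ is fixed and known to the designer. For a distinguished agent $k\in V$ define the mechanism $g^{2,k}$ by, for $i\in V\setminus\{k\}$, $$g^{2,k}_i(\mathbf m)=\begin{cases}\dfrac{1}{|\mathrm{posE}(\mathbf m_{E_i\cap E_k})\setminus\{k\}|}, & \text{if } i\in \mathrm{posE}(\mathbf m_{E_k}),\\[2mm] 0,&\text{otherwise,}\end{cases}\qquad g^{2,k}_k(\mathbf m)=1-\sum_{i\in V\setminus\{k\}}g^{2,k}_i(\mathbf m).$$ Then for every $k\in V$, $g^{2,k}$ is valid and DSIC. Moreover, if the Intersection Condition E(k) holds, i.e. $E_i\cap E_j\cap E_k\neq\varnothing$ for all $i,j\in V\setminus\{k\}$ (including $i=j$), then $g^{2,k}$ is efficient.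
   Context: Let $V=\{1,\dots,n\}$ be a finite set of agents. A relationship network on $V$ assigns to every unordered pair of distinct agents exactly one of three symmetric relations: friends, enemies, or impartial. For $i\in V$, $F_i,E_i,I_i$ denote the sets of friends, enemies and impartials of $i$; they partition $V\setminus\{i\}$, and $j\in F_i\iff i\in F_j$ (similarly for $E$ and $I$). A set $N\subseteq V$ is the set of needy agents. Preferences: fix weights $w_f,w_e>0$. For $p,p'\in[0,1]^V$, $p\succ_i p'$ iff either $p_i>p'_i$, or $p_i=p'_i$ and $w_f\sum_{j\in F_i}(p_j-p'_j)-w_e\sum_{j\in E_i}(p_j-p'_j)>0$; $p\succsim_i p'$ means not $p'\succ_i p$. Known-network setting: each agent $i$ sends a message $m_i\subseteq V$ (the set of agents $i$ reports as needy; $j\in m_i$ is a positive vote of $i$ on $j$). A message profile is $\mathbf m=(m_i)_{i\in V}$; for $X\subseteq V$, $\mathbf m_X=(m_j)_{j\in X}$. A mechanism is a function $g:(2^V)^V\to[0,1]^V$; it is valid if $\sum_{i\in V}g_i(\mathbf m)\le 1$ for all $\mathbf m$; it is DSIC if for all $i\in V$, all profiles $\mathbf m$ and all $m'_i\subseteq V$, $g(\mathbf m)\succsim_i g(m'_i,\mathbf m_{-i})$; it is efficient if for every nonempty $N\subseteq V$, at the truthful profile $\mathbf m$ with $m_j=N$ for all $j$, $\sum_{i\in N}g_i(\mathbf m)=1$. For $X\subseteq V$, $\mathrm{posE}(\mathbf m_X)$ is the set of agents $j\in V$ such that $j\in m_l$ for every $l\in X\cap E_j$ (i.e. $j$ receives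 positive votes from all its enemies in $X$). *)

theory Defs
  imports Complex_Main
begin

text \<open>Agents are the elements of a finite type 'a (V = UNIV).
  A relationship network assigns to each pair one of three relations.\<close>

datatype relation = Friends | Enemies | Impartial

definition network :: "('a \<Rightarrow> 'a \<Rightarrow> relation) \<Rightarrow> bool" where
  "network r \<longleftrightarrow> (\<forall>i j. r i j = r j i)"

definition Fr :: "('a \<Rightarrow> 'a \<Rightarrow> relation) \<Rightarrow> 'a \<Rightarrow> 'a set" where
  "Fr r i = {j. j \<noteq> i \<and> r i j = Friends}"

definition En :: "('a \<Rightarrow> 'a \<Rightarrow> relation) \<Rightarrow> 'a \<Rightarrow> 'a set" where
  "En r i = {j. j \<noteq> i \<and> r i j = Enemies}"

definition Im :: "('a \<Rightarrow> 'a \<Rightarrow> relation) \<Rightarrow> 'a \<Rightarrow> 'a set" where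
  "Im r i = {j. j \<noteq> i \<and> r i j = Impartial}"

definition pref_strict ::
  "('a::finite \<Rightarrow> 'a \<Rightarrow> relation) \<Rightarrow> real \<Rightarrow> real \<Rightarrow> 'a \<Rightarrow> ('a \<Rightarrow> real) \<Rightarrow> ('a \<Rightarrow> real) \<Rightarrow> bool" where
  "pref_strict r wF wE i p p' \<longleftrightarrow>
     p i > p' i \<or>
     (p i = p' i \<and>
      wF * (\<Sum>j\<in>Fr r i. p j - p' j) - wE * (\<Sum>j\<in>En r i. p j - p' j) > 0)"

definition pref_weak ::
  "('a::finite \<Rightarrow> 'a \<Rightarrow> relation) \<Rightarrow> real \<Rightarrow> real \<Rightarrow> 'a \<Rightarrow> ('a \<Rightarrow> real) \<Rightarrow> ('a \<Rightarrow> real) \<Rightarrow> bool" where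
  "pref_weak r wF wE i p p' \<longleftrightarrow> \<not> pref_strict r wF wE i p' p"

definition valid :: "(('a::finite \<Rightarrow> 'a set) \<Rightarrow> 'a \<Rightarrow> real) \<Rightarrow> bool" where
  "valid g \<longleftrightarrow> (\<forall>m. (\<forall>i. 0 \<le> g m i \<and> g m i \<le> 1) \<and> (\<Sum>i\<in>UNIV. g m i) \<le> 1)"

definition DSIC ::
  "('a::finite \<Rightarrow> 'a \<Rightarrow> relation) \<Rightarrow> real \<Rightarrow> real \<Rightarrow> (('a \<Rightarrow> 'a set) \<Rightarrow> 'a \<Rightarrow> real) \<Rightarrow> bool" where
  "DSIC r wF wE g \<longleftrightarrow> (\<forall>i m m'. pref_weak r wF wE i (g m) (g (m(i := m'))))"

definition efficient :: "(('a::finite \<Rightarrow> 'a set) \<Rightarrow> 'a \<Rightarrow> real) \<Rightarrow> bool" where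
  "efficient g \<longleftrightarrow> (\<forall>N. N \<noteq> {} \<longrightarrow> (\<Sum>i\<in>N. g (\<lambda>_. N) i) = 1)"

definition posE :: "('a \<Rightarrow> 'a \<Rightarrow> relation) \<Rightarrow> ('a \<Rightarrow> 'a set) \<Rightarrow> 'a set \<Rightarrow> 'a set" where
  "posE r m X = {j. \<forall>l \<in> X \<inter> En r j. j \<in> m l}"

definition g2_aux :: "('a \<Rightarrow> 'a \<Rightarrow> relation) \<Rightarrow> 'a \<Rightarrow> ('a \<Rightarrow> 'a set) \<Rightarrow> 'a \<Rightarrow> real" where
  "g2_aux r k m i =
     (if i \<in> posE r m (En r k)
      then 1 / real (card (posE r m (En r i \<inter> En r k) - {k}))
      else 0)"

definition g2 :: "('a::finite \<Rightarrow> 'a \<Rightarrow> relation) \<Rightarrow> 'a \<Rightarrow> ('a \<Rightarrow> 'a set) \<Rightarrow> 'a \<Rightarrow> real" where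
  "g2 r k m i =
     (if i = k then 1 - (\<Sum>j\<in>UNIV - {k}. g2_aux r k m j) else g2_aux r k m i)"

definition intersection_condition :: "('a \<Rightarrow> 'a \<Rightarrow> relation) \<Rightarrow> 'a \<Rightarrow> bool" where
  "intersection_condition r k \<longleftrightarrow>
     (\<forall>i j. i \<noteq> k \<longrightarrow> j \<noteq> k \<longrightarrow> En r i \<inter> En r j \<inter> En r k \<noteq> {})"

end

theory Submission
  imports Defs
begin

lemma posE_anti: "X \<subseteq> Y \<Longrightarrow> posE r m Y \<subseteq> posE r m X"
  unfolding posE_def by auto

lemma posE_cong: "(\<forall>l\<in>X. m l = m' l) \<Longrightarrow> posE r m X = posE r m' X"
  unfolding posE_def by auto

lemma aux_cong:
  assumes "\<forall>l\<in>En r j \<inter> En r k. m l = m' l"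
  shows "g2_aux r k m j = g2_aux r k m' j"
proof -
  have 1: "j \<in> posE r m (En r k) \<longleftrightarrow> j \<in> posE r m' (En r k)"
    using assms by (auto simp: posE_def)
  have 2: "posE r m (En r j \<inter> En r k) = posE r m' (En r j \<inter> En r k)"
    using assms by (intro posE_cong) auto
  show ?thesis unfolding g2_aux_def using 1 2 by simp
qed

lemma aux_nonneg: "0 \<le> g2_aux r k m j"
  by (simp add: g2_aux_def)

lemma aux_bound:
  fixes r :: "'a::finite \<Rightarrow> 'a \<Rightarrow> relation"
  assumes "j \<noteq> k" "j \<in> posE r m (En r k)"
  shows "g2_aux r k m j \<le> 1 / real (card (posE r m (En r k) - {k}))"
    and "card (posE r m (En r k) - {k}) > 0"
proof -
  let ?S = "posE r m (En r k) - {k}"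
  let ?T = "posE r m (En r j \<inter> En r k) - {k}"
  have sub: "?S \<subseteq> ?T" using posE_anti[of "En r j \<inter> En r k" "En r k" r m] by auto
  have "j \<in> ?S" using assms by auto
  then have "?S \<noteq> {}" by blast
  then show c: "card ?S > 0" by (simp add: card_gt_0_iff)
  have "card ?S \<le> card ?T" by (rule card_mono[OF _ sub]) simp
  then have "1 / real (card ?T) \<le> 1 / real (card ?S)"
    using c by (intro divide_left_mono) auto
  then show "g2_aux r k m j \<le> 1 / real (card ?S)"
    unfolding g2_aux_def using assms by simp
qed

lemma aux_le1:
  fixes r :: "'a::finite \<Rightarrow> 'a \<Rightarrow> relation"
  assumes "j \<noteq> k"
  shows "g2_aux r k m j \<le> 1"
proof (cases "j \<in> posE r m (En r k)")
  case True
  have "g2_aux r k m j \<le> 1 / real (card (posE r m (En r k) - {k}))"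
    using aux_bound(1)[OF assms True] .
  also have "\<dots> \<le> 1" using aux_bound(2)[OF assms True] by simp
  finally show ?thesis .
next
  case False then show ?thesis by (simp add: g2_aux_def)
qed

lemma aux_sum:
  fixes r :: "'a::finite \<Rightarrow> 'a \<Rightarrow> relation"
  shows "(\<Sum>j\<in>UNIV-{k}. g2_aux r k m j) \<le> 1"
proof -
  let ?S = "posE r m (En r k) - {k}"
  have "(\<Sum>j\<in>UNIV-{k}. g2_aux r k m j) = (\<Sum>j\<in>?S. g2_aux r k m j)"
    by (rule sum.mono_neutral_right) (auto simp: g2_aux_def)
  also have "\<dots> \<le> real (card ?S) * (1 / real (card ?S))"
    by (rule sum_bounded_above) (use aux_bound(1) in auto)
  also have "\<dots> \<le> 1" by (cases "card ?S = 0") auto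
  finally show ?thesis .
qed

lemma aux_sum_nonneg: "0 \<le> (\<Sum>j\<in>A. g2_aux r k m j)"
  by (rule sum_nonneg) (simp add: aux_nonneg)

lemma g2_other: "i \<noteq> k \<Longrightarrow> g2 r k m i = g2_aux r k m i"
  by (simp add: g2_def)

lemma sum_g2:
  fixes r :: "'a::finite \<Rightarrow> 'a \<Rightarrow> relation"
  shows "(\<Sum>i\<in>UNIV. g2 r k m i) = 1"
proof -
  have "(\<Sum>i\<in>UNIV. g2 r k m i) = g2 r k m k + (\<Sum>i\<in>UNIV-{k}. g2 r k m i)"
    by (rule sum.remove) auto
  also have "(\<Sum>i\<in>UNIV-{k}. g2 r k m i) = (\<Sum>i\<in>UNIV-{k}. g2_aux r k m i)"
    by (rule sum.cong) (auto simp: g2_def)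
  finally show ?thesis by (simp add: g2_def)
qed

lemma En_sym:
  assumes "network r" shows "i \<in> En r j \<longleftrightarrow> j \<in> En r i"
proof -
  have "r i j = r j i" using assms unfolding network_def by blast
  then show ?thesis unfolding En_def by auto
qed

lemma valid_g2:
  fixes r :: "'a::finite \<Rightarrow> 'a \<Rightarrow> relation"
  shows "valid (g2 r k)"
  unfolding valid_def
proof (intro allI conjI)
  fix m i
  show "0 \<le> g2 r k m i"
    using aux_sum[of r k m] aux_nonneg[of r k m i] by (simp add: g2_def)
  show "g2 r k m i \<le> 1"
    using aux_sum_nonneg[of r k m "UNIV-{k}"] aux_le1[of i k r m] by (simp add: g2_def)
  show "(\<Sum>i\<in>UNIV. g2 r k m i) \<le> 1" using sum_g2[of r k m] by simp
qed

lemma DSIC_g2: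
  fixes r :: "'a::finite \<Rightarrow> 'a \<Rightarrow> relation"
  assumes net: "network r"
  shows "DSIC r wF wE (g2 r k)"
  unfolding DSIC_def pref_weak_def
proof (intro allI)
  fix i :: 'a and m :: "'a \<Rightarrow> 'a set" and m' :: "'a set"
  let ?m2 = "m(i := m')"
  show "\<not> pref_strict r wF wE i (g2 r k ?m2) (g2 r k m)"
  proof (cases "i \<in> En r k")
    case False
    have "\<And>j. g2_aux r k ?m2 j = g2_aux r k m j"
      by (rule aux_cong) (use False in auto)
    then have "g2 r k ?m2 = g2 r k m" by (auto simp: g2_def fun_eq_iff)
    then show ?thesis by (simp add: pref_strict_def)
  next
    case True
    have ik: "i \<noteq> k" using True by (simp add: En_def)
    have ki: "k \<in> En r i" using True En_sym[OF net] by blast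
    have same: "g2 r k ?m2 j = g2 r k m j" if "j \<notin> En r i" "j \<noteq> k" for j
    proof -
      have "i \<notin> En r j" using that En_sym[OF net] by blast
      then have "g2_aux r k ?m2 j = g2_aux r k m j" by (intro aux_cong) auto
      then show ?thesis using that by (simp add: g2_def)
    qed
    have iin: "i \<notin> En r i" by (simp add: En_def)
    have e1: "g2 r k ?m2 i = g2 r k m i" using same[OF iin ik] .
    have fr: "\<And>j. j \<in> Fr r i \<Longrightarrow> j \<notin> En r i \<and> j \<noteq> k"
      using ki by (auto simp: Fr_def En_def)
    have e2: "(\<Sum>j\<in>Fr r i. g2 r k ?m2 j - g2 r k m j) = 0"
      by (rule sum.neutral) (use fr same in auto)
    define f where "f = (\<lambda>j. g2 r k ?m2 j - g2 r k m j)"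
    have tot: "sum f UNIV = 0"
      unfolding f_def by (simp add: sum_subtractf sum_g2)
    have split: "sum f UNIV = sum f (UNIV - En r i) + sum f (En r i)"
      by (rule sum.subset_diff) simp_all
    have z: "sum f (UNIV - En r i) = 0"
    proof (rule sum.neutral, intro ballI)
      fix j assume "j \<in> UNIV - En r i"
      then have "j \<notin> En r i" "j \<noteq> k" using ki by auto
      then show "f j = 0" unfolding f_def using same by simp
    qed
    have e3': "sum f (En r i) = 0" using tot split z by linarith
    have e3: "(\<Sum>j\<in>En r i. g2 r k ?m2 j - g2 r k m j) = 0" using e3' by (simp add: f_def)
    show ?thesis unfolding pref_strict_def using e1 e2 e3 by simp
  qed
qed

lemma eff_g2:
  fixes r :: "'a::finite \<Rightarrow> 'a \<Rightarrow> relation"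
  assumes ic: "intersection_condition r k"
  shows "efficient (g2 r k)"
  unfolding efficient_def
proof (intro allI impI)
  fix N :: "'a set"
  assume Nne: "N \<noteq> {}"
  let ?m = "\<lambda>_::'a. N"
  have aux: "g2_aux r k ?m i = (if i \<in> N - {k} then 1 / real (card (N - {k})) else 0)"
    if "i \<noteq> k" for i
  proof -
    have ne: "En r i \<inter> En r k \<noteq> {}" using ic that unfolding intersection_condition_def by blast
    have 1: "i \<in> posE r ?m (En r k) \<longleftrightarrow> i \<in> N"
      using ne by (auto simp: posE_def)
    have 2: "posE r ?m (En r i \<inter> En r k) - {k} = N - {k}"
    proof (intro set_eqI iffI)
      fix j assume "j \<in> posE r ?m (En r i \<inter> En r k) - {k}"
      then have jk: "j \<noteq> k" and h: "\<forall>l\<in>(En r i \<inter> En r k) \<inter> En r j. j \<in> N"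
        by (auto simp: posE_def)
      have "En r i \<inter> En r j \<inter> En r k \<noteq> {}"
        using ic that jk unfolding intersection_condition_def by blast
      then show "j \<in> N - {k}" using h jk by blast
    qed (auto simp: posE_def)
    show ?thesis unfolding g2_aux_def 1 2 using that by simp
  qed
  define s where "s = (\<Sum>j\<in>N-{k}. g2_aux r k ?m j)"
  have s1: "(\<Sum>j\<in>UNIV-{k}. g2_aux r k ?m j) = s"
    unfolding s_def by (rule sum.mono_neutral_right) (auto simp: aux)
  show "(\<Sum>i\<in>N. g2 r k ?m i) = 1"
  proof (cases "k \<in> N")
    case True
    have "(\<Sum>i\<in>N. g2 r k ?m i) = g2 r k ?m k + (\<Sum>i\<in>N-{k}. g2 r k ?m i)"
      by (rule sum.remove) (use True in auto)
    also have "(\<Sum>i\<in>N-{k}. g2 r k ?m i) = s"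
      unfolding s_def by (rule sum.cong) (auto simp: g2_def)
    finally show ?thesis using s1 by (simp add: g2_def)
  next
    case False
    then have NN: "N - {k} = N" by auto
    have "(\<Sum>i\<in>N. g2 r k ?m i) = (\<Sum>i\<in>N. 1 / real (card N))"
      by (rule sum.cong) (use False aux NN in \<open>auto simp: g2_def\<close>)
    also have "\<dots> = 1" using Nne by simp
    finally show ?thesis .
  qed
qed

theorem theorem2:
  fixes r :: "'a::finite \<Rightarrow> 'a \<Rightarrow> relation" and k :: 'a and wF wE :: real
  assumes "network r" and "wF > 0" and "wE > 0"
  shows "valid (g2 r k) \<and> DSIC r wF wE (g2 r k) \<and>
         (intersection_condition r k \<longrightarrow> efficient (g2 r k))"
  using valid_g2 DSIC_g2[OF assms(1)] eff_g2 by blast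

end
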